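(* Let $X$ be a real Banach space. (a) Let $x \in S(X)$ and $f \in S(X^* )$ be such that $f(x) > 0$ and, for some $0<t<2$, $s^*(f,x,t) > 0$. Then \[ \operatorname{diam}\big(S(B(X^* ), x, f(x)(1 - s^*(f,x,t)))\big) < 2t. \] (b) An element $f \in S(X^* )$ is a w*-denting point of $B(X^* )$ if and only if $d^*(f,t) > 0$ for all $0<t<2$.
   Context: $B(\cdot)$, $S(\cdot)$ denote closed unit ball and unit sphere. For $x \in S(X)$ and real $\alpha$, the w*-slice is $S(B(X^* ), x, \alpha) := \{g \in B(X^* ) : g(x) > \alpha\}$. An element $f \in S(X^* )$ is a w*-denting point of $B(X^* )$ if for every $\varepsilon>0$ there is a w*-slice $S(B(X^* ),x,\alpha)$ ($x\in S(X)$, $0<\alpha<1$) containing $f$ with diameter less than $\varepsilon$. For $0<t<2$, $f \in S(X^* )$, $x \in S(X)$: $s^*(f,x,t) := \inf\{\|f+h\| - 1 : h \in X^*,\ \|h\| \geq t/4,\ h(x) = 0\}$, and $d^*(f,t) := \sup_{x \in S(X)} s^*(f,x,t)$. *)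

theory Defs
  imports "HOL-Analysis.Analysis"
begin

definition wslice :: "'a::real_normed_vector \<Rightarrow> real \<Rightarrow> ('a \<Rightarrow>\<^sub>L real) set" where
  "wslice x \<alpha> = {g. norm g \<le> 1 \<and> blinfun_apply g x > \<alpha>}"

text \<open>s^*(f,x,t), valued in the extended reals (infimum of the empty set is +infinity).\<close>
definition s_star :: "('a::real_normed_vector \<Rightarrow>\<^sub>L real) \<Rightarrow> 'a \<Rightarrow> real \<Rightarrow> ereal" where
  "s_star f x t = (INF h \<in> {h. norm h \<ge> t / 4 \<and> blinfun_apply h x = 0}. ereal (norm (f + h) - 1))"

definition d_star :: "('a::real_normed_vector \<Rightarrow>\<^sub>L real) \<Rightarrow> real \<Rightarrow> ereal" where
  "d_star f t = (SUP x \<in> {x. norm x = 1}. s_star f x t)"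

definition w_star_denting :: "('a::real_normed_vector \<Rightarrow>\<^sub>L real) \<Rightarrow> bool" where
  "w_star_denting f \<longleftrightarrow> norm f = 1 \<and>
     (\<forall>\<epsilon>>0. \<exists>x \<alpha>. norm x = 1 \<and> 0 < \<alpha> \<and> \<alpha> < 1 \<and> f \<in> wslice x \<alpha> \<and> diameter (wslice x \<alpha>) < \<epsilon>)"

end

theory Submission
  imports Defs
begin


definition lgraph :: "('a::real_normed_vector \<times> real) set \<Rightarrow> bool" where
 "lgraph G \<longleftrightarrow> (\<forall>y a b. (y,a)\<in>G \<longrightarrow> (y,b)\<in>G \<longrightarrow> a=b) \<and>
   (\<forall>y a z b. (y,a)\<in>G \<longrightarrow> (z,b)\<in>G \<longrightarrow> (y+z,a+b)\<in>G) \<and>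
   (\<forall>y a c. (y,a)\<in>G \<longrightarrow> (c *\<^sub>R y, c*a)\<in>G) \<and>
   (\<forall>y a. (y,a)\<in>G \<longrightarrow> a \<le> norm y)"

lemma lgraphD:
  assumes "lgraph G"
  shows "\<And>y a b. (y,a)\<in>G \<Longrightarrow> (y,b)\<in>G \<Longrightarrow> a=b"
   and "\<And>y a u b. (y,a)\<in>G \<Longrightarrow> (u,b)\<in>G \<Longrightarrow> (y+u,a+b)\<in>G"
   and "\<And>y a c. (y,a)\<in>G \<Longrightarrow> (c *\<^sub>R y, c*a)\<in>G"
   and "\<And>y a. (y,a)\<in>G \<Longrightarrow> a \<le> norm y"
  using assms unfolding lgraph_def by blast+

lemma lgraph_union:
  assumes C: "C \<in> chains A" "C \<noteq> {}" and A: "\<And>G. G \<in> A \<Longrightarrow> lgraph G"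
  shows "lgraph (\<Union>C)"
proof -
  have L: "\<And>G. G \<in> C \<Longrightarrow> lgraph G" using C chainsD2 A by blast
  have ch: "\<And>X Y. X \<in> C \<Longrightarrow> Y \<in> C \<Longrightarrow> X \<subseteq> Y \<or> Y \<subseteq> X" using C chainsD by blast
  have two: "\<exists>G\<in>C. p \<in> G \<and> q \<in> G" if P: "p \<in> \<Union>C" "q \<in> \<Union>C" for p q
  proof -
    obtain X Y where "X \<in> C" "Y \<in> C" "p \<in> X" "q \<in> Y" using P by blast
    then show ?thesis using ch[of X Y] by blast
  qed
  show ?thesis unfolding lgraph_def
  proof (intro conjI allI impI)
    fix y a b assume "(y,a)\<in>\<Union>C" "(y,b)\<in>\<Union>C"
    then obtain G where "G\<in>C" "(y,a)\<in>G" "(y,b)\<in>G" using two by blast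
    then show "a = b" using lgraphD(1)[OF L] by blast
  next
    fix y a z b assume "(y,a)\<in>\<Union>C" "(z,b)\<in>\<Union>C"
    then obtain G where "G\<in>C" "(y,a)\<in>G" "(z,b)\<in>G" using two by blast
    then show "(y+z,a+b) \<in> \<Union>C" using lgraphD(2)[OF L] by blast
  next
    fix y a c assume "(y,a)\<in>\<Union>C"
    then obtain G where "G\<in>C" "(y,a)\<in>G" by blast
    then show "(c *\<^sub>R y, c*a) \<in> \<Union>C" using lgraphD(3)[OF L] by blast
  next
    fix y a assume "(y,a)\<in>\<Union>C"
    then obtain G where "G\<in>C" "(y,a)\<in>G" by blast
    then show "a \<le> norm y" using lgraphD(4)[OF L] by blast
  qed
qed

lemma lgraph_extend:
  assumes G: "lgraph G" and z: "\<And>a. (z,a) \<notin> G" and x: "(x,1) \<in> G"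
  shows "\<exists>G'. lgraph G' \<and> G \<subseteq> G' \<and> G' \<noteq> G"
proof -
  have fn: "\<And>y a b. (y,a)\<in>G \<Longrightarrow> (y,b)\<in>G \<Longrightarrow> a=b"
   and add: "\<And>y a u b. (y,a)\<in>G \<Longrightarrow> (u,b)\<in>G \<Longrightarrow> (y+u,a+b)\<in>G"
   and sc: "\<And>y a c. (y,a)\<in>G \<Longrightarrow> (c *\<^sub>R y, c*a)\<in>G"
   and dom: "\<And>y a. (y,a)\<in>G \<Longrightarrow> a \<le> norm y" using lgraphD[OF G] by blast+
  have key: "a1 - norm (y1 - z) \<le> norm (y2 + z) - a2" if "(y1,a1)\<in>G" "(y2,a2)\<in>G" for y1 a1 y2 a2
  proof -
    have "a1 + a2 \<le> norm (y1 + y2)" using dom[OF add[OF that]] .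
    also have "\<dots> = norm ((y1 - z) + (y2 + z))" by simp
    also have "\<dots> \<le> norm (y1 - z) + norm (y2 + z)" by (rule norm_triangle_ineq)
    finally show ?thesis by simp
  qed
  define S where "S = (\<lambda>(y,a). a - norm (y - z)) ` G"
  define w where "w = Sup S"
  have ne: "S \<noteq> {}" using x S_def by auto
  have bdd: "bdd_above S" unfolding S_def using key x by (intro bdd_aboveI) fastforce
  have wlo: "a - norm (y - z) \<le> w" if "(y,a)\<in>G" for y a
    unfolding w_def using bdd that S_def by (intro cSup_upper) auto
  have whi: "w \<le> norm (y + z) - a" if "(y,a)\<in>G" for y a
    unfolding w_def using ne key that S_def by (intro cSup_least) auto
  define G' where "G' = {(y + c *\<^sub>R z, a + c*w) | y a c. (y,a)\<in>G}"
  have "lgraph G'" unfolding lgraph_def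
  proof (intro conjI allI impI)
    fix v a b assume "(v,a)\<in>G'" "(v,b)\<in>G'"
    then obtain y1 a1 c1 y2 a2 c2 where 1: "(y1,a1)\<in>G" "v = y1 + c1 *\<^sub>R z" "a = a1 + c1*w"
      and 2: "(y2,a2)\<in>G" "v = y2 + c2 *\<^sub>R z" "b = a2 + c2*w" unfolding G'_def by blast
    show "a = b"
    proof (cases "c1 = c2")
      case True
      then have "y1 = y2" using 1 2 by simp
      then show ?thesis using True 1 2 fn by blast
    next
      case False
      have "(c2 - c1) *\<^sub>R z = y1 - y2" using 1 2 by (simp add: algebra_simps)
      moreover have "z = (1/(c2-c1)) *\<^sub>R ((c2 - c1) *\<^sub>R z)" using False by simp
      ultimately have "z = (1/(c2-c1)) *\<^sub>R (y1 - y2)" by simp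
      moreover have "((1/(c2-c1)) *\<^sub>R (y1 - y2), (1/(c2-c1)) * (a1 - a2)) \<in> G"
        using sc[OF add[OF 1(1) sc[OF 2(1), of "-1"]], of "1/(c2-c1)"] by simp
      ultimately show ?thesis using z by metis
    qed
  next
    fix v a u b assume "(v,a)\<in>G'" "(u,b)\<in>G'"
    then obtain y1 a1 c1 y2 a2 c2 where 1: "(y1,a1)\<in>G" "v = y1 + c1 *\<^sub>R z" "a = a1 + c1*w"
      and 2: "(y2,a2)\<in>G" "u = y2 + c2 *\<^sub>R z" "b = a2 + c2*w" unfolding G'_def by blast
    have "(v+u, a+b) = (y1+y2 + (c1+c2) *\<^sub>R z, (a1+a2) + (c1+c2)*w)"
      using 1 2 by (simp add: algebra_simps)
    then show "(v+u, a+b) \<in> G'" unfolding G'_def using add[OF 1(1) 2(1)] by blast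
  next
    fix v a c assume "(v,a)\<in>G'"
    then obtain y1 a1 c1 where 1: "(y1,a1)\<in>G" "v = y1 + c1 *\<^sub>R z" "a = a1 + c1*w"
      unfolding G'_def by blast
    have "(c *\<^sub>R v, c*a) = (c *\<^sub>R y1 + (c*c1) *\<^sub>R z, c*a1 + (c*c1)*w)"
      using 1 by (simp add: algebra_simps)
    then show "(c *\<^sub>R v, c*a) \<in> G'" unfolding G'_def using sc[OF 1(1)] by blast
  next
    fix v a assume "(v,a)\<in>G'"
    then obtain y a1 c where 1: "(y,a1)\<in>G" "v = y + c *\<^sub>R z" "a = a1 + c*w"
      unfolding G'_def by blast
    show "a \<le> norm v"
    proof (cases c "0::real" rule: linorder_cases)
      case equal then show ?thesis using 1 dom by simp
    next
      case greater
      have "w \<le> norm ((1/c) *\<^sub>R y + z) - (1/c)*a1" using whi sc[OF 1(1)] by blast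
      also have "(1/c) *\<^sub>R y + z = (1/c) *\<^sub>R v" using 1 greater by (simp add: algebra_simps)
      finally have "c * w \<le> c * (norm ((1/c) *\<^sub>R v) - (1/c)*a1)" using greater by simp
      also have "\<dots> = norm v - a1" using greater by (simp add: algebra_simps)
      finally show ?thesis using 1 by simp
    next
      case less
      define d where "d = -c"
      have d: "d > 0" using less d_def by simp
      have "(1/d)*a1 - norm ((1/d) *\<^sub>R y - z) \<le> w" using wlo sc[OF 1(1)] by blast
      also have "(1/d) *\<^sub>R y - z = (1/d) *\<^sub>R v" using 1 d d_def by (simp add: algebra_simps)
      finally have "d * ((1/d)*a1 - norm ((1/d) *\<^sub>R v)) \<le> d * w" using d by simp
      then have "a1 - norm v \<le> d * w" using d by (simp add: algebra_simps)
      then show ?thesis using 1 d_def by simp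
    qed
  qed
  moreover have "G \<subseteq> G'" unfolding G'_def by force
  moreover have "(z, w) \<in> G'"
  proof -
    have "(0::'a, 0::real) \<in> G" using sc[OF x, of 0] by simp
    moreover have "(z, w) = (0 + 1 *\<^sub>R z, 0 + 1 * w)" by simp
    ultimately show ?thesis unfolding G'_def by blast
  qed
  ultimately show ?thesis using z by blast
qed

lemma hahn_banach_norming:
  fixes x :: "'a::real_normed_vector"
  assumes "norm x = 1"
  shows "\<exists>\<phi>::'a \<Rightarrow>\<^sub>L real. norm \<phi> \<le> 1 \<and> blinfun_apply \<phi> x = 1"
proof -
  define A where "A = {G. lgraph G \<and> (x,1) \<in> G}"
  define G0 where "G0 = {(c *\<^sub>R x, c) | c. True}"
  have "lgraph G0" unfolding lgraph_def G0_def
  proof (intro conjI allI impI)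
    fix y a b assume "(y, a) \<in> {(c *\<^sub>R x, c) |c. True}" "(y, b) \<in> {(c *\<^sub>R x, c) |c. True}"
    then have "a *\<^sub>R x = b *\<^sub>R x" by auto
    then have "norm ((a - b) *\<^sub>R x) = 0" by (simp add: algebra_simps)
    then show "a = b" using assms by simp
  next
    fix y a z b assume "(y, a) \<in> {(c *\<^sub>R x, c) |c. True}" "(z, b) \<in> {(c *\<^sub>R x, c) |c. True}"
    then have "y = a *\<^sub>R x" "z = b *\<^sub>R x" by auto
    then have "(y+z, a+b) = ((a+b) *\<^sub>R x, a+b)" by (simp add: algebra_simps)
    then show "(y+z, a+b) \<in> {(c *\<^sub>R x, c) |c. True}" by blast
  next
    fix y a c assume "(y, a) \<in> {(c *\<^sub>R x, c) |c. True}"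
    then have "y = a *\<^sub>R x" by auto
    then have "(c *\<^sub>R y, c*a) = ((c*a) *\<^sub>R x, c*a)" by simp
    then show "(c *\<^sub>R y, c*a) \<in> {(c *\<^sub>R x, c) |c. True}" by blast
  next
    fix y a assume "(y, a) \<in> {(c *\<^sub>R x, c) |c. True}"
    then have "y = a *\<^sub>R x" by auto
    then show "a \<le> norm y" using assms by simp
  qed
  moreover have "(x,1) \<in> G0" unfolding G0_def by (auto intro!: exI[of _ 1])
  ultimately have G0A: "G0 \<in> A" unfolding A_def by blast
  have "\<exists>M\<in>A. \<forall>X\<in>A. M \<subseteq> X \<longrightarrow> X = M"
  proof (rule Zorn_Lemma2, intro ballI)
    fix C assume C: "C \<in> chains A"
    show "\<exists>U\<in>A. \<forall>X\<in>C. X \<subseteq> U"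
    proof (cases "C = {}")
      case True then show ?thesis using G0A by blast
    next
      case False
      have "lgraph (\<Union>C)" using lgraph_union[OF C False] A_def by blast
      moreover have "(x,1) \<in> \<Union>C" using False chainsD2[OF C] A_def by blast
      ultimately show ?thesis unfolding A_def by blast
    qed
  qed
  then obtain M where M: "lgraph M" "(x,1) \<in> M" and max: "\<And>X. lgraph X \<Longrightarrow> (x,1)\<in>X \<Longrightarrow> M \<subseteq> X \<Longrightarrow> X = M"
    unfolding A_def by blast
  have tot: "\<exists>a. (y,a) \<in> M" for y
  proof (rule ccontr)
    assume "\<not> ?thesis"
    then obtain G' where "lgraph G'" "M \<subseteq> G'" "G' \<noteq> M" using lgraph_extend[OF M(1) _ M(2)] by blast
    then show False using max M(2) by blast
  qed
  have fn: "\<And>y a b. (y,a)\<in>M \<Longrightarrow> (y,b)\<in>M \<Longrightarrow> a=b"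
   and add: "\<And>y a u b. (y,a)\<in>M \<Longrightarrow> (u,b)\<in>M \<Longrightarrow> (y+u,a+b)\<in>M"
   and sc: "\<And>y a c. (y,a)\<in>M \<Longrightarrow> (c *\<^sub>R y, c*a)\<in>M"
   and dom: "\<And>y a. (y,a)\<in>M \<Longrightarrow> a \<le> norm y" using lgraphD[OF M(1)] by blast+
  define p where "p y = (THE a. (y,a) \<in> M)" for y
  have pM: "(y, p y) \<in> M" for y unfolding p_def using tot fn by (metis theI)
  have pe: "(y,a) \<in> M \<Longrightarrow> p y = a" for y a using pM fn by blast
  have lin: "linear p"
  proof
    show "p (b1 + b2) = p b1 + p b2" for b1 b2 using pe add pM by blast
    show "p (r *\<^sub>R b) = r *\<^sub>R p b" for r b using pe sc pM by simp
  qed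
  have bd: "norm (p y) \<le> 1 * norm y" for y
  proof -
    have "p y \<le> norm y" using dom pM by blast
    moreover have "- p y \<le> norm y" using dom[OF sc[OF pM, of "-1" y]] by simp
    ultimately show ?thesis by simp
  qed
  have bl: "bounded_linear p" unfolding bounded_linear_def bounded_linear_axioms_def
    using lin bd by (metis mult.commute)
  have ap: "blinfun_apply (Blinfun p) = p" using bl by (rule bounded_linear_Blinfun_apply)
  have "norm (Blinfun p) \<le> 1" by (rule norm_blinfun_bound) (use ap bd in auto)
  moreover have "blinfun_apply (Blinfun p) x = 1" using ap pe[OF M(2)] by simp
  ultimately show ?thesis by blast
qed



lemma ap_add[simp]: "blinfun_apply (f + h) x = blinfun_apply f x + blinfun_apply h x"
  by (simp add: blinfun.add_left)
lemma ap_diff[simp]: "blinfun_apply (f - h) x = blinfun_apply f x - blinfun_apply h x"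
  by (simp add: blinfun.diff_left)
lemma ap_scale[simp]: "blinfun_apply (c *\<^sub>R f) x = c * blinfun_apply (f::'a::real_normed_vector \<Rightarrow>\<^sub>L real) x"
  by (simp add: blinfun.scaleR_left)

lemma app_le_norm: "norm x = 1 \<Longrightarrow> norm (f::'a::real_normed_vector \<Rightarrow>\<^sub>L real) \<le> 1 \<Longrightarrow> blinfun_apply f x \<le> 1"
proof -
  assume a: "norm x = 1" "norm f \<le> 1"
  have "norm (blinfun_apply f x) \<le> norm f * norm x" by (rule norm_blinfun)
  then have "\<bar>blinfun_apply f x\<bar> \<le> 1" using a by simp
  then show ?thesis by simp
qed

lemma s_star_le:
  assumes "norm h \<ge> t/4" "blinfun_apply h x = 0"
  shows "s_star f x t \<le> ereal (norm (f + h) - 1)"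
  unfolding s_star_def using assms by (intro INF_lower) auto

lemma s_star_le_real:
  assumes "s_star f x t = ereal s" "norm h \<ge> t/4" "blinfun_apply h x = 0"
  shows "s \<le> norm (f + h) - 1"
  using s_star_le[OF assms(2,3), of f] assms(1) by simp

lemma part_a:
  fixes x :: "'a::real_normed_vector" and f :: "'a \<Rightarrow>\<^sub>L real"
  assumes nx: "norm x = 1" and nf: "norm f = 1" and fx: "blinfun_apply f x > 0"
    and t: "0 < t" "t < 2" and ss: "s_star f x t = ereal s" and s: "s > 0"
  shows "diameter (wslice x (blinfun_apply f x * (1 - s))) < 2*t"
proof -
  define F where "F = blinfun_apply f x"
  have F1: "F \<le> 1" using app_le_norm[OF nx, of f] nf F_def by simp
  have "\<exists>h::'a \<Rightarrow>\<^sub>L real. norm h \<ge> t/4 \<and> blinfun_apply h x = 0"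
  proof (rule ccontr)
    assume "\<not> ?thesis"
    then have "{h::'a \<Rightarrow>\<^sub>L real. norm h \<ge> t/4 \<and> blinfun_apply h x = 0} = {}" by auto
    then have "s_star f x t = \<infinity>" unfolding s_star_def by (simp only: INF_empty top_ereal_def)
    then show False using ss by simp
  qed
  then obtain h0 :: "'a \<Rightarrow>\<^sub>L real" where h0: "norm h0 \<ge> t/4" "blinfun_apply h0 x = 0" by blast
  have h0pos: "norm h0 > 0" using h0 t by linarith
  define psi where "psi = (t/4/norm h0) *\<^sub>R h0"
  have npsi: "norm psi = t/4" unfolding psi_def using h0pos t by simp
  have "s \<le> norm (f + psi) - 1"
    by (rule s_star_le_real[OF ss]) (use npsi h0 psi_def in auto)
  also have "\<dots> \<le> norm f + norm psi - 1" using norm_triangle_ineq by simp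
  finally have su: "s \<le> t/4" using nf npsi by simp
  obtain phi :: "'a \<Rightarrow>\<^sub>L real" where phi: "norm phi \<le> 1" "blinfun_apply phi x = 1"
    using hahn_banach_norming[OF nx] by blast
  define h1 where "h1 = F *\<^sub>R phi - f"
  have nfh1: "norm (f + h1) \<le> F"
  proof -
    have "f + h1 = F *\<^sub>R phi" unfolding h1_def by simp
    then show ?thesis using phi fx F_def by (simp add: mult_left_le)
  qed
  have h1x: "blinfun_apply h1 x = 0" unfolding h1_def F_def using phi by simp
  have "norm h1 < t/4"
  proof (rule ccontr)
    assume "\<not> ?thesis"
    then have "s \<le> norm (f + h1) - 1" using s_star_le_real[OF ss _ h1x] by simp
    then show False using nfh1 F1 s by simp
  qed
  have Flo: "F \<ge> 1 - t/4"
  proof -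
    have "1 = norm (- h1 + F *\<^sub>R phi)" using nf unfolding h1_def by simp
    also have "\<dots> \<le> norm (- h1) + norm (F *\<^sub>R phi)" by (rule norm_triangle_ineq)
    also have "\<dots> = norm h1 + norm (F *\<^sub>R phi)" by (simp only: norm_minus_cancel)
    also have "norm (F *\<^sub>R phi) \<le> F" using phi fx F_def by (simp add: mult_left_le)
    finally show ?thesis using \<open>norm h1 < t/4\<close> by simp
  qed
  define S where "S = wslice x (F * (1 - s))"
  show ?thesis
  proof (cases "t > 1")
    case True
    have "diameter S \<le> 2"
    proof (rule diameter_le)
      fix g1 g2 assume "g1 \<in> S" "g2 \<in> S"
      then have "norm g1 \<le> 1" "norm g2 \<le> 1" unfolding S_def wslice_def by auto
      then show "norm (g1 - g2) \<le> 2" using norm_triangle_ineq4[of g1 g2] by simp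
    qed simp
    then show ?thesis using True S_def F_def by simp
  next
    case False
    define u where "u = t/4"
    have u: "0 < u" "u \<le> 1/4" using t False u_def by auto
    have s1: "1 - s \<ge> 3/4" using su u u_def by simp
    have F34: "F \<ge> 3/4" using Flo u u_def by simp
    have Fpos: "F > 0" using fx F_def by simp
    have bnd: "\<exists>a k. g = a *\<^sub>R f + k \<and> 1 - s < a \<and> a \<le> 1/F \<and> norm k \<le> a * (u / (1 - s))"
      if g: "g \<in> S" for g
    proof -
      have ng: "norm g \<le> 1" and gx: "blinfun_apply g x > F * (1 - s)" using g unfolding S_def wslice_def by auto
      define a where "a = blinfun_apply g x / F"
      have a1: "a > 1 - s" unfolding a_def using gx Fpos by (simp add: field_simps)
      have apos: "a > 0" using a1 s1 by simp
      have gx1: "blinfun_apply g x \<le> 1" using app_le_norm[OF nx ng] by simp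
      have aF: "a \<le> 1/F" unfolding a_def using gx1 Fpos by (simp add: divide_right_mono)
      define h where "h = (1/a) *\<^sub>R g - f"
      have gxp: "blinfun_apply g x > 0"
      proof -
        have "F * (1 - s) > 0" using Fpos s1 by simp
        then show ?thesis using gx by linarith
      qed
      have hx: "blinfun_apply h x = 0" unfolding h_def a_def using Fpos gxp F_def by simp
      have fh: "f + h = (1/a) *\<^sub>R g" unfolding h_def by simp
      have nfh: "norm (f + h) \<le> 1/a" unfolding fh using apos ng by (simp add: divide_right_mono)
      have nh: "norm h \<le> u / (1 - s)"
      proof (cases "norm h < t/4")
        case True
        then have "norm h \<le> u" using u_def by simp
        also have "u \<le> u / (1 - s)" using u s1 s by (simp add: field_simps)
        finally show ?thesis .
      next
        case False
        define r where "r = norm h"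
        have r: "r \<ge> u" "r > 0" using False u u_def r_def by auto
        define c where "c = u / r"
        have c: "0 < c" "c \<le> 1" using r u c_def by auto
        have "norm (c *\<^sub>R h) = u" using c r u r_def c_def by simp
        then have "s \<le> norm (f + c *\<^sub>R h) - 1" using s_star_le_real[OF ss, of "c *\<^sub>R h"] hx u_def by simp
        also have "f + c *\<^sub>R h = (1 - c) *\<^sub>R f + c *\<^sub>R (f + h)" by (simp add: algebra_simps)
        also have "norm \<dots> \<le> (1 - c) + c * norm (f + h)"
          using norm_triangle_ineq[of "(1 - c) *\<^sub>R f" "c *\<^sub>R (f + h)"] c nf by simp
        finally have "s \<le> c * (norm (f + h) - 1)" by (simp add: algebra_simps)
        also have "\<dots> \<le> c * (1/a - 1)" using nfh c by simp
        also have "\<dots> < c * (1/(1-s) - 1)"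
        proof -
          have "1/a < 1/(1-s)" using a1 s1 by (simp add: frac_less2)
          then show ?thesis using c by simp
        qed
        also have "1/(1-s) - 1 = s / (1 - s)" using s1 by (simp add: field_simps)
        finally have "s < c * (s / (1 - s))" .
        then have "s * 1 < s * (c + s)" using s s1 by (simp add: field_simps)
        then have "1 < c + s" using s by (simp only: mult_less_cancel_left_pos)
        then have "1 - s < c" by simp
        then have "(1 - s) * r < u" using r c_def by (simp add: field_simps)
        then show ?thesis using s1 r_def by (simp add: field_simps)
      qed
      define k where "k = a *\<^sub>R h"
      have "g = a *\<^sub>R f + k" unfolding k_def h_def using apos by (simp add: algebra_simps)
      moreover have "norm k \<le> a * (u / (1 - s))"
      proof -
        have "norm k = a * norm h" unfolding k_def using apos by simp
        also have "\<dots> \<le> a * (u / (1 - s))" using apos nh by (intro mult_left_mono) auto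
        finally show ?thesis .
      qed
      ultimately show ?thesis using a1 aF by blast
    qed
    define D where "D = (1/F - (1 - s)) + 2 * ((1/F) * (u / (1 - s)))"
    have dist: "norm (g1 - g2) \<le> D" if G: "g1 \<in> S" "g2 \<in> S" for g1 g2
    proof -
      obtain a1 k1 where 1: "g1 = a1 *\<^sub>R f + k1" "1 - s < a1" "a1 \<le> 1/F" "norm k1 \<le> a1 * (u / (1 - s))"
        using bnd[OF G(1)] by blast
      obtain a2 k2 where 2: "g2 = a2 *\<^sub>R f + k2" "1 - s < a2" "a2 \<le> 1/F" "norm k2 \<le> a2 * (u / (1 - s))"
        using bnd[OF G(2)] by blast
      have q: "u / (1 - s) \<ge> 0" using u s1 by simp
      have "g1 - g2 = (a1 - a2) *\<^sub>R f + (k1 - k2)" using 1 2 by (simp add: algebra_simps)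
      then have "norm (g1 - g2) \<le> norm ((a1 - a2) *\<^sub>R f) + norm (k1 - k2)"
        by (metis norm_triangle_ineq)
      also have "\<dots> \<le> \<bar>a1 - a2\<bar> + (norm k1 + norm k2)" using nf norm_triangle_ineq4[of k1 k2] by simp
      also have "\<bar>a1 - a2\<bar> \<le> 1/F - (1 - s)" using 1 2 by linarith
      also have "norm k1 \<le> (1/F) * (u / (1 - s))" using 1 q by (meson mult_right_mono order_trans)
      also have "norm k2 \<le> (1/F) * (u / (1 - s))" using 2 q by (meson mult_right_mono order_trans)
      finally show ?thesis unfolding D_def by simp
    qed
    have "D < 2 * t"
    proof -
      have iF: "1/F \<le> 4/3" using F34 by (simp add: field_simps)
      have iF1: "1/F - 1 \<le> (4/3) * u"
      proof -
        have "1/F - 1 = (1 - F) / F" using Fpos by (simp add: field_simps)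
        also have "\<dots> \<le> u / F" using Flo u_def Fpos by (simp add: divide_right_mono)
        also have "\<dots> = u * (1/F)" by simp
        also have "\<dots> \<le> u * (4/3)" using iF u by (intro mult_left_mono) auto
        finally show ?thesis by simp
      qed
      have is1: "u / (1 - s) \<le> (4/3) * u"
      proof -
        have "1/(1-s) \<le> 4/3" using s1 by (simp add: field_simps)
        then have "u * (1/(1-s)) \<le> u * (4/3)" using u by (intro mult_left_mono) auto
        then show ?thesis by simp
      qed
      have "(1/F) * (u / (1 - s)) \<le> (4/3) * ((4/3) * u)"
        using iF is1 u s1 by (intro mult_mono) auto
      moreover have "D = (1/F - 1) + s + 2 * ((1/F) * (u / (1 - s)))" unfolding D_def by simp
      ultimately have "D \<le> (4/3)*u + u + 2 * ((16/9) * u)" using iF1 su u_def by linarith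
      then show ?thesis using u u_def by simp
    qed
    moreover have "f \<in> S"
    proof -
      have "F * (1 - s) < F * 1" using Fpos s by (intro mult_strict_left_mono) auto
      then show ?thesis unfolding S_def wslice_def using nf F_def by simp
    qed
    moreover have "diameter S \<le> D"
      by (rule diameter_le) (use dist \<open>f \<in> S\<close> in auto)
    ultimately show ?thesis using S_def F_def by simp
  qed
qed



lemma s_star_neg:
  fixes f :: "'a::real_normed_vector \<Rightarrow>\<^sub>L real"
  shows "s_star f (- x) t = s_star f x t"
proof -
  have "{h::'a \<Rightarrow>\<^sub>L real. norm h \<ge> t/4 \<and> blinfun_apply h (-x) = 0} = {h::'a \<Rightarrow>\<^sub>L real. norm h \<ge> t/4 \<and> blinfun_apply h x = 0}"
    by (auto simp: blinfun.minus_right)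
  then show ?thesis unfolding s_star_def by simp
qed

lemma s_small:
  fixes x :: "'a::real_normed_vector" and f :: "'a \<Rightarrow>\<^sub>L real"
  assumes nf: "norm f = 1" and t: "0 < t" and ss: "s_star f x t = ereal s"
  shows "s \<le> t/4"
proof -
  have "\<exists>h::'a \<Rightarrow>\<^sub>L real. norm h \<ge> t/4 \<and> blinfun_apply h x = 0"
  proof (rule ccontr)
    assume "\<not> ?thesis"
    then have "{h::'a \<Rightarrow>\<^sub>L real. norm h \<ge> t/4 \<and> blinfun_apply h x = 0} = {}" by auto
    then have "s_star f x t = \<infinity>" unfolding s_star_def by (simp only: INF_empty top_ereal_def)
    then show False using ss by simp
  qed
  then obtain h0 :: "'a \<Rightarrow>\<^sub>L real" where h0: "norm h0 \<ge> t/4" "blinfun_apply h0 x = 0" by blast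
  have h0pos: "norm h0 > 0" using h0 t by linarith
  define psi where "psi = (t/4/norm h0) *\<^sub>R h0"
  have npsi: "norm psi = t/4" unfolding psi_def using h0pos t by simp
  have "s \<le> norm (f + psi) - 1"
    by (rule s_star_le_real[OF ss]) (use npsi h0 psi_def in auto)
  also have "\<dots> \<le> norm f + norm psi - 1" using norm_triangle_ineq by simp
  finally show "s \<le> t/4" using nf npsi by simp
qed

lemma half_lt: "0 < (q::real) \<Longrightarrow> q/2 < q" by simp

lemma wslice_bounded: "bounded (wslice x a)"
  by (rule bounded_subset[OF bounded_cball[of 0 1]]) (auto simp: wslice_def)

lemma dir1:
  fixes f :: "'a::real_normed_vector \<Rightarrow>\<^sub>L real"
  assumes d: "w_star_denting f" and t: "0 < t" "t < 2"
  shows "d_star f t > 0"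
proof -
  have nf: "norm f = 1" using d unfolding w_star_denting_def by blast
  obtain x a where xa: "norm x = 1" "0 < a" "a < 1" "f \<in> wslice x a" "diameter (wslice x a) < t/8"
  proof -
    have "t/8 > 0" using t by simp
    moreover have "\<forall>\<epsilon>>0. \<exists>x \<alpha>. norm x = 1 \<and> 0 < \<alpha> \<and> \<alpha> < 1 \<and> f \<in> wslice x \<alpha> \<and> diameter (wslice x \<alpha>) < \<epsilon>"
      using d unfolding w_star_denting_def by (rule conjunct2)
    ultimately obtain x0 a0 where "norm x0 = 1 \<and> 0 < a0 \<and> a0 < 1 \<and> f \<in> wslice x0 a0 \<and> diameter (wslice x0 a0) < t/8"
      by blast
    then show ?thesis using that by blast
  qed
  define F where "F = blinfun_apply f x"
  have Fa: "F > a" using xa(4) F_def unfolding wslice_def by simp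
  define \<delta> where "\<delta> = min ((F/a - 1)/2) (t/16)"
  have dpos: "\<delta> > 0" unfolding \<delta>_def using Fa xa t by (simp add: field_simps)
  have d1: "a * (1 + \<delta>) < F"
  proof -
    have p: "F/a - 1 > 0" using Fa xa by (simp add: field_simps)
    have "\<delta> \<le> (F/a - 1)/2" unfolding \<delta>_def by (rule min.cobounded1)
    moreover have "(F/a - 1)/2 < F/a - 1" by (rule half_lt[OF p])
    ultimately have "\<delta> < F/a - 1" by (rule order_le_less_trans)
    then have "1 + \<delta> < F/a" by simp
    then have "a * (1 + \<delta>) < a * (F/a)" using xa by (intro mult_strict_left_mono) auto
    then show ?thesis using xa by simp
  qed
  have d2: "\<delta> \<le> t/16" unfolding \<delta>_def by (rule min.cobounded2)
  have close: "norm (g - f) < t/8" if "g \<in> wslice x a" for g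
  proof -
    have "dist g f \<le> diameter (wslice x a)" using diameter_bounded_bound[OF wslice_bounded that xa(4)] .
    then show ?thesis using xa(5) by (simp add: dist_norm)
  qed
  have lb: "ereal \<delta> \<le> ereal (norm (f + h) - 1)" if h: "norm h \<ge> t/4" "blinfun_apply h x = 0" for h
  proof (rule ccontr)
    assume "\<not> ?thesis"
    then have lt: "norm (f + h) < 1 + \<delta>" by simp
    show False
    proof (cases "norm (f + h) \<le> 1")
      case True
      then have "f + h \<in> wslice x a" unfolding wslice_def using h Fa F_def by simp
      then have "norm ((f + h) - f) < t/8" by (rule close)
      then have "norm h < t/8" by simp
      then show False using h t by simp
    next
      case False
      define n where "n = norm (f + h)"
      have n: "n > 1" "n < 1 + \<delta>" using False lt n_def by auto
      define g where "g = (1/n) *\<^sub>R (f + h)"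
      have "norm g = \<bar>1/n\<bar> * n" unfolding g_def n_def by (simp only: norm_scaleR)
      then have ng: "norm g = 1" using n by simp
      have gx: "blinfun_apply g x = F / n" unfolding g_def using h F_def by simp
      have "a * n < a * (1 + \<delta>)" using n xa(2) by (intro mult_strict_left_mono) auto
      then have "a * n < F" using d1 by linarith
      then have "a < F / n" using n by (simp add: field_simps)
      then have "g \<in> wslice x a" unfolding wslice_def using ng gx by simp
      then have c: "norm (g - f) < t/8" by (rule close)
      have "n *\<^sub>R (g - f) = h - (n - 1) *\<^sub>R f" unfolding g_def using n by (simp add: algebra_simps)
      then have "norm (h - (n - 1) *\<^sub>R f) = norm (n *\<^sub>R (g - f))" by simp
      also have "\<dots> = n * norm (g - f)" using n by simp
      finally have e1: "norm (h - (n - 1) *\<^sub>R f) = n * norm (g - f)" .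
      have e2: "norm ((n - 1) *\<^sub>R f) = n - 1" using n nf by simp
      have "norm h - norm ((n - 1) *\<^sub>R f) \<le> norm (h - (n - 1) *\<^sub>R f)" by (rule norm_triangle_ineq2)
      then have "norm h - (n - 1) \<le> n * norm (g - f)" using e1 e2 by simp
      also have "\<dots> \<le> (1 + \<delta>) * (t/8)" using c n dpos by (intro mult_mono) auto
      finally have "t/4 - \<delta> \<le> (1 + \<delta>) * (t/8)" using h n by linarith
      moreover have "(1 + \<delta>) * (t/8) \<le> t/8 + (t/16) * (t/8)" using d2 t by (simp add: algebra_simps mult_right_mono)
      ultimately have "t/4 - t/16 \<le> t/8 + (t/16) * (t/8)" using d2 by linarith
      moreover have "(t/16) * (t/8) < (t/16) * 1" using t by (intro mult_strict_left_mono) auto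
      ultimately show False using t by linarith
    qed
  qed
  have "ereal \<delta> \<le> s_star f x t" unfolding s_star_def by (rule INF_greatest) (use lb in auto)
  also have "s_star f x t \<le> d_star f t" unfolding d_star_def using xa(1) by (intro SUP_upper) auto
  finally have "ereal \<delta> \<le> d_star f t" .
  moreover have "0 < ereal \<delta>" using dpos by simp
  ultimately show ?thesis by (rule order.strict_trans2[rotated])
qed

lemma app_lin: "blinfun_apply (g - c *\<^sub>R f) x = blinfun_apply g x - c * blinfun_apply (f::'a::real_normed_vector \<Rightarrow>\<^sub>L real) x"
  by (simp add: blinfun.diff_left)

lemma ker_zero:
  fixes k :: "'a::real_normed_vector \<Rightarrow>\<^sub>L real"
  assumes small: "\<And>h::'a \<Rightarrow>\<^sub>L real. blinfun_apply h x = 0 \<Longrightarrow> norm h < t/4" and t: "t > 0"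
    and kx: "blinfun_apply k x = 0"
  shows "k = 0"
proof (rule ccontr)
  assume "k \<noteq> 0"
  then have kp: "norm k > 0" by simp
  define c where "c = t / (4 * norm k)"
  have "norm (c *\<^sub>R k) = t/4" unfolding c_def using kp t by simp
  moreover have "blinfun_apply (c *\<^sub>R k) x = 0" using kx by simp
  ultimately show False using small[of "c *\<^sub>R k"] by simp
qed

lemma dir2:
  fixes f :: "'a::real_normed_vector \<Rightarrow>\<^sub>L real"
  assumes nf: "norm f = 1" and d: "\<forall>t. 0 < t \<and> t < 2 \<longrightarrow> d_star f t > 0"
  shows "w_star_denting f"
  unfolding w_star_denting_def
proof (intro conjI allI impI)
  show "norm f = 1" by (rule nf)
  fix \<epsilon> :: real assume e: "\<epsilon> > 0"
  define t where "t = min (\<epsilon>/4) 1"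
  have t: "0 < t" "t < 2" "t \<le> \<epsilon>/4" "t \<le> 1" using e t_def by auto
  have "d_star f t > 0" using d t by blast
  then obtain x0 :: 'a where x0: "norm x0 = 1" "s_star f x0 t > 0"
    unfolding d_star_def by (auto simp: less_SUP_iff)
  obtain x :: 'a where x: "norm x = 1" "s_star f x t > 0" "blinfun_apply f x \<ge> 0"
  proof (cases "blinfun_apply f x0 \<ge> 0")
    case True then show ?thesis using that x0 by blast
  next
    case False
    have "norm (- x0) = 1" "s_star f (- x0) t > 0" "blinfun_apply f (- x0) \<ge> 0"
      using x0 False s_star_neg[of f x0 t] by (auto simp: blinfun.minus_right)
    then show ?thesis using that by blast
  qed
  define F where "F = blinfun_apply f x"
  have F1: "F \<le> 1" using app_le_norm[OF x(1), of f] nf F_def by simp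
  have Fpos: "F > 0"
  proof (rule ccontr)
    assume "\<not> F > 0"
    then have F0: "F = 0" using x(3) F_def by simp
    have "s_star f x t \<le> ereal (norm (f + (- f)) - 1)"
      by (rule s_star_le) (use F0 F_def nf t in \<open>auto simp: blinfun.minus_left\<close>)
    then have "s_star f x t \<le> ereal (-1)" by simp
    with x(2) have "0 < ereal (-1)" by (rule less_le_trans)
    then show False by simp
  qed
  show "\<exists>x \<alpha>. norm x = 1 \<and> 0 < \<alpha> \<and> \<alpha> < 1 \<and> f \<in> wslice x \<alpha> \<and> diameter (wslice x \<alpha>) < \<epsilon>"
  proof (cases "s_star f x t = \<infinity>")
    case False
    then obtain s where ss: "s_star f x t = ereal s" using x(2) by (cases "s_star f x t") auto
    have s: "s > 0" using ss x(2) by simp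
    have su: "s \<le> t/4" by (rule s_small[OF nf t(1) ss])
    have "diameter (wslice x (F * (1 - s))) < 2*t"
      using part_a[OF x(1) nf _ t(1,2) ss s] Fpos F_def by simp
    moreover have "F * (1 - s) < F * 1" using Fpos s by (intro mult_strict_left_mono) auto
    moreover have "0 < F * (1 - s)" using Fpos s su t by simp
    moreover have "f \<in> wslice x (F * (1 - s))" using nf F_def \<open>F * (1 - s) < F * 1\<close> unfolding wslice_def by simp
    ultimately show ?thesis using x(1) F1 t by (intro exI[of _ x] exI[of _ "F * (1 - s)"]) auto
  next
    case True
    have small: "norm h < t/4" if "blinfun_apply h x = 0" for h :: "'a \<Rightarrow>\<^sub>L real"
    proof (rule ccontr)
      assume "\<not> ?thesis"
      then have "t/4 \<le> norm h" by simp
      then have "s_star f x t \<le> ereal (norm (f + h) - 1)" using s_star_le that by blast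
      then show False using True by simp
    qed
    have rep: "g = blinfun_apply g x *\<^sub>R f" if "blinfun_apply f x = 1" for g :: "'a \<Rightarrow>\<^sub>L real"
    proof -
      have "g - blinfun_apply g x *\<^sub>R f = 0"
        by (rule ker_zero[OF small t(1)]) (use that in \<open>simp only: app_lin, simp\<close>)
      then show ?thesis by simp
    qed
    obtain phi :: "'a \<Rightarrow>\<^sub>L real" where phi: "norm phi \<le> 1" "blinfun_apply phi x = 1"
      using hahn_banach_norming[OF x(1)] by blast
    have "phi - (1/F) *\<^sub>R f = 0"
      by (rule ker_zero[OF small t(1)]) (use phi Fpos F_def in \<open>simp only: app_lin, simp\<close>)
    then have "phi = (1/F) *\<^sub>R f" by simp
    then have "1/F \<le> 1" using phi nf Fpos by simp
    then have F1': "F = 1" using F1 Fpos by (simp add: field_simps)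
    define \<alpha> where "\<alpha> = 1 - min \<epsilon> 1 / 4"
    have al: "0 < \<alpha>" "\<alpha> < 1" using e \<alpha>_def by auto
    have fin: "f \<in> wslice x \<alpha>" using nf F1' F_def al unfolding wslice_def by simp
    have "diameter (wslice x \<alpha>) \<le> 1 - \<alpha>"
    proof (rule diameter_le)
      fix g1 g2 assume g: "g1 \<in> wslice x \<alpha>" "g2 \<in> wslice x \<alpha>"
      then have g1: "blinfun_apply g1 x > \<alpha>" "blinfun_apply g1 x \<le> 1"
        and g2: "blinfun_apply g2 x > \<alpha>" "blinfun_apply g2 x \<le> 1"
        using app_le_norm[OF x(1)] unfolding wslice_def by auto
      have "g1 - g2 = (blinfun_apply g1 x - blinfun_apply g2 x) *\<^sub>R f"
      proof -
        have "g1 - g2 = blinfun_apply g1 x *\<^sub>R f - blinfun_apply g2 x *\<^sub>R f"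
          using rep[of g1] rep[of g2] F1' F_def by simp
        then show ?thesis by (simp add: scaleR_diff_left)
      qed
      then have "norm (g1 - g2) = \<bar>blinfun_apply g1 x - blinfun_apply g2 x\<bar>" using nf by simp
      then show "norm (g1 - g2) \<le> 1 - \<alpha>" using g1 g2 by linarith
    qed (use fin in blast)
    then have "diameter (wslice x \<alpha>) < \<epsilon>" using e \<alpha>_def by linarith
    then show ?thesis using x(1) al fin by blast
  qed
qed

theorem mainTheorem3:
  shows "(\<forall>(x::'a::banach) (f::'a \<Rightarrow>\<^sub>L real) t.
            norm x = 1 \<and> norm f = 1 \<and> blinfun_apply f x > 0 \<and> 0 < t \<and> t < 2 \<and>
            0 < s_star f x t \<and> s_star f x t < \<infinity> \<longrightarrow>
            diameter (wslice x (blinfun_apply f x * (1 - real_of_ereal (s_star f x t)))) < 2 * t)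
       \<and> (\<forall>f::'a \<Rightarrow>\<^sub>L real. norm f = 1 \<longrightarrow>
            (w_star_denting f \<longleftrightarrow> (\<forall>t. 0 < t \<and> t < 2 \<longrightarrow> d_star f t > 0)))"
proof (intro conjI allI impI)
  fix x :: 'a and f :: "'a \<Rightarrow>\<^sub>L real" and t :: real
  assume H: "norm x = 1 \<and> norm f = 1 \<and> blinfun_apply f x > 0 \<and> 0 < t \<and> t < 2 \<and>
            0 < s_star f x t \<and> s_star f x t < \<infinity>"
  then obtain s where ss: "s_star f x t = ereal s" by (cases "s_star f x t") auto
  then have s: "s > 0" using H by simp
  show "diameter (wslice x (blinfun_apply f x * (1 - real_of_ereal (s_star f x t)))) < 2 * t"
    using part_a[of x f t s] H ss s by simp
next
  fix f :: "'a \<Rightarrow>\<^sub>L real" assume nf: "norm f = 1"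
  show "w_star_denting f \<longleftrightarrow> (\<forall>t. 0 < t \<and> t < 2 \<longrightarrow> d_star f t > 0)"
    using dir1[of f] dir2[OF nf] by blast
qed

end
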